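(* Let $p$ be a prime with $p\equiv 1\pmod 4$, let $a$ be a generator of $\mathbb{F}_p^*$, let $k=\frac{p-1}{4}$, and let $$g_a=\begin{pmatrix}a&0\\0&a^{-1}\end{pmatrix},\qquad s=\begin{pmatrix}1&2^{-1}a^k\\ a^k&2^{-1}\end{pmatrix}\in SL_2(\mathbb{F}_p).$$ Let $T_w=\{g\in SL_2(\mathbb{F}_p): gw=wg\}$ be the centralizer of $w=\begin{pmatrix}0&1\\-1&0\end{pmatrix}$ in $SL_2(\mathbb{F}_p)$. Then $t=s\,g_a\,s^{-1}$ is a generator of $T_w$.
   Context: $2^{-1}$ denotes the inverse of $2$ in $\mathbb{F}_p$. Equivalently, $T_w=\left\{\begin{pmatrix}\alpha&-\beta\\ \beta&\alpha\end{pmatrix}:\alpha,\beta\in\mathbb{F}_p,\ \alpha^2+\beta^2=1\right\}$. *)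

theory Defs
  imports "HOL-Analysis.Analysis"
begin

definition mat2 :: "'a::zero \<Rightarrow> 'a \<Rightarrow> 'a \<Rightarrow> 'a \<Rightarrow> 'a^2^2" where
  "mat2 x y z u = vector [vector [x, y], vector [z, u]]"

definition mpow :: "'a::semiring_1^'n^'n \<Rightarrow> nat \<Rightarrow> 'a^'n^'n" where
  "mpow g n = ((\<lambda>m. m ** g) ^^ n) (mat 1)"

definition SL2 :: "('a::comm_ring_1^2^2) set" where
  "SL2 = {g. det g = 1}"

definition centralizer_SL2 :: "'a::comm_ring_1^2^2 \<Rightarrow> ('a^2^2) set" where
  "centralizer_SL2 w = {g \<in> SL2. g ** w = w ** g}"

definition generates :: "'a::semiring_1^'n^'n \<Rightarrow> ('a^'n^'n) set \<Rightarrow> bool" where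
  "generates t H \<longleftrightarrow> t \<in> H \<and> (\<forall>g\<in>H. \<exists>n. g = mpow t n)"

end

theory Submission
  imports Defs "HOL-Number_Theory.Residues"
begin

lemma mat2_eq_iff:
  "(A::'a::zero^2^2) = B \<longleftrightarrow> A$1$1 = B$1$1 \<and> A$1$2 = B$1$2 \<and> A$2$1 = B$2$1 \<and> A$2$2 = B$2$2"
  by (auto simp: vec_eq_iff forall_2)

lemma mat2_nth [simp]:
  "mat2 x y z u $ 1 $ 1 = x" "mat2 x y z u $ 1 $ 2 = y"
  "mat2 x y z u $ 2 $ 1 = z" "mat2 x y z u $ 2 $ 2 = u"
  by (simp_all add: mat2_def)

lemma mat2_entries: "(A::'a::zero^2^2) = mat2 (A$1$1) (A$1$2) (A$2$1) (A$2$2)"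
  by (simp add: mat2_eq_iff)

lemma mat2_mult:
  "mat2 x y z u ** mat2 x' y' z' u' =
   mat2 (x*x' + y*z') (x*y' + y*u') (z*x' + u*z') (z*y' + u*u')"
  for x :: "'a::semiring_1"
  by (simp add: mat2_eq_iff matrix_matrix_mult_def sum_2)

lemma mat2_one: "(mat 1 :: 'a::semiring_1^2^2) = mat2 1 0 0 1"
  by (simp add: mat2_eq_iff mat_def)

lemma mat2_det: "det (mat2 x y z u) = x*u - y*z"
  by (simp add: det_2)

lemma mat2_eq: "mat2 x y z u = mat2 x' y' z' u' \<longleftrightarrow> x=x' \<and> y=y' \<and> z=z' \<and> u=u'"
  by (simp add: mat2_eq_iff)

lemma fermat_field:
  fixes x :: "'a::{field,finite}"
  assumes "x \<noteq> 0"
  shows "x ^ (CARD('a) - 1) = 1"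
proof -
  have "x * (\<Prod>y\<in>UNIV-{0}. x * y) = x * x ^ (card (UNIV :: 'a set) - 1) * \<Prod>(UNIV-{0})"
    by (simp add: prod.distrib mult_ac)
  moreover have "(\<Prod>y\<in>UNIV-{0}. x * y) = (\<Prod>y\<in>UNIV-{0}. (y::'a))"
    by (rule prod.reindex_bij_witness[of _ "\<lambda>y. y / x" "\<lambda>y. x * y"]) (use assms in auto)
  moreover have "\<Prod>(UNIV-{0::'a}) \<noteq> 0" by simp
  ultimately show ?thesis using assms by simp
qed

lemma mpow_Suc: "mpow t (Suc n) = mpow t n ** t"
  by (simp add: mpow_def)

lemma mpow_0: "mpow t 0 = mat 1"
  by (simp add: mpow_def)


lemma detlem:
  fixes c i :: "'a::field"
  assumes two: "(2::'a) \<noteq> 0" and ii: "i * i = -1" and c: "c \<noteq> 0"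
  shows "((c + inverse c)/2) * ((c + inverse c)/2) - (i*(inverse c - c)/2) * (i*(c - inverse c)/2) = 1"
proof -
  define d where "d = inverse c"
  define h where "h = inverse (2::'a)"
  have cd: "c * d = 1" using c unfolding d_def by simp
  have h2: "2 * h = 1" using two unfolding h_def by simp
  show ?thesis unfolding divide_inverse d_def[symmetric] h_def[symmetric]
  proof -
    have "(c + d) * h * ((c + d) * h) - i * (d - c) * h * (i * (c - d) * h)
        = (2*h)*(2*h)*(c*d) + h*h*((c-d)*(c-d))*(1 + i*i)" by (simp add: algebra_simps)
    thus "(c + d) * h * ((c + d) * h) - i * (d - c) * h * (i * (c - d) * h) = 1"
      using cd h2 ii by simp
  qed
qed

lemma entlem:
  fixes x y i :: "'a::field"
  assumes two: "(2::'a) \<noteq> 0" and ii: "i * i = -1"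
  shows "((x + i*y) + (x - i*y))/2 = x" "i*((x - i*y) - (x + i*y))/2 = y"
        "i*((x + i*y) - (x - i*y))/2 = -y"
proof -
  define h where "h = inverse (2::'a)"
  have h2: "2 * h = 1" using two unfolding h_def by simp
  have "((x + i*y) + (x - i*y)) * h = (2*h) * x" by (simp add: algebra_simps)
  thus "((x + i*y) + (x - i*y))/2 = x" using h2 unfolding divide_inverse h_def[symmetric] by simp
  have "i*((x - i*y) - (x + i*y)) * h = -(2*h) * (i*i) * y" by (simp add: algebra_simps)
  thus "i*((x - i*y) - (x + i*y))/2 = y" using h2 ii unfolding divide_inverse h_def[symmetric] by simp
  have "i*((x + i*y) - (x - i*y)) * h = (2*h) * (i*i) * y" by (simp add: algebra_simps)
  thus "i*((x + i*y) - (x - i*y))/2 = -y" using h2 ii unfolding divide_inverse h_def[symmetric] by simp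
qed

lemma main_part:
  fixes a i :: "'a::field"
  assumes two: "(2::'a) \<noteq> 0" and ii: "i * i = -1" and anz: "a \<noteq> 0"
    and gen: "\<forall>x::'a. x \<noteq> 0 \<longrightarrow> (\<exists>n::nat. x = a ^ n)"
  shows "generates (mat2 1 (inverse 2 * i) i (inverse 2) ** mat2 a 0 0 (inverse a)
     ** matrix_inv (mat2 1 (inverse 2 * i) i (inverse 2))) (centralizer_SL2 (mat2 0 1 (-1) 0))"
proof -
  define s where "s = mat2 1 (inverse 2 * i) i (inverse 2)"
  define w where "w = mat2 0 1 (-1) (0::'a)"
  define s' where "s' = mat2 (inverse 2) (-(inverse 2 * i)) (-i) (1::'a)"
  have ss': "s ** s' = mat 1" and s's: "s' ** s = mat 1"
    unfolding s_def s'_def mat2_one mat2_mult mat2_eq using two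
    by (simp_all add: field_simps ii)
  have minv: "matrix_inv s = s'"
  proof -
    have "\<exists>A'. s ** A' = mat 1 \<and> A' ** s = mat 1" using ss' s's by blast
    hence A: "s ** matrix_inv s = mat 1 \<and> matrix_inv s ** s = mat 1"
      unfolding matrix_inv_def by (rule someI_ex)
    have "matrix_inv s = (s' ** s) ** matrix_inv s" using s's by simp
    also have "\<dots> = s'" using A by (simp flip: matrix_mul_assoc)
    finally show ?thesis .
  qed
  define D where "D c = s ** mat2 c 0 0 (inverse c) ** s'" for c :: 'a
  have Dform: "D c = mat2 ((c + inverse c)/2) (i*(inverse c - c)/2) (i*(c - inverse c)/2) ((c + inverse c)/2)"
    if "c \<noteq> 0" for c
    unfolding D_def s_def s'_def mat2_mult mat2_eq using two that
    by (simp_all add: field_simps ii)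
  have Dmem: "D c \<in> centralizer_SL2 w" if "c \<noteq> 0" for c
  proof -
    have "det (D c) = 1" unfolding Dform[OF that] mat2_det by (rule detlem[OF two ii that])
    moreover have "D c ** w = w ** D c"
      unfolding Dform[OF that] w_def mat2_mult mat2_eq using two by (simp add: field_simps)
    ultimately show ?thesis by (simp add: centralizer_SL2_def SL2_def)
  qed
  have tD: "s ** mat2 a 0 0 (inverse a) ** matrix_inv s = D a" unfolding minv D_def ..
  have powD: "mpow (D a) n = D (a ^ n)" for n
  proof (induction n)
    case 0
    show ?case using ss' by (simp add: mpow_0 D_def flip: mat2_one)
  next
    case (Suc n)
    have "mpow (D a) (Suc n) = D (a^n) ** D a" using Suc by (simp add: mpow_Suc)
    also have "\<dots> = s ** (mat2 (a^n) 0 0 (inverse (a ^ n)) ** (s' ** s)) ** mat2 a 0 0 (inverse a) ** s'"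
      unfolding D_def by (simp add: matrix_mul_assoc)
    also have "\<dots> = s ** (mat2 (a^n) 0 0 (inverse (a ^ n)) ** mat2 a 0 0 (inverse a)) ** s'"
      unfolding s's by (simp add: matrix_mul_assoc)
    also have "mat2 (a^n) 0 0 (inverse (a ^ n)) ** mat2 a 0 0 (inverse a) = mat2 (a ^ Suc n) 0 0 (inverse (a ^ Suc n))"
      by (simp add: mat2_mult mult.commute)
    also have "s ** mat2 (a ^ Suc n) 0 0 (inverse (a ^ Suc n)) ** s' = D (a ^ Suc n)"
      unfolding D_def ..
    finally show ?case .
  qed
  show ?thesis unfolding generates_def tD[unfolded s_def] w_def[symmetric]
  proof (intro conjI ballI)
    show "D a \<in> centralizer_SL2 w" using Dmem anz .
  next
    fix h assume hm: "h \<in> centralizer_SL2 w"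
    define x where "x = h$1$1"
    define y where "y = h$1$2"
    have hw: "h ** w = w ** h" and dh: "det h = 1" using hm by (auto simp: centralizer_SL2_def SL2_def)
    have hh: "h = mat2 x y (-y) x"
    proof -
      have e: "(h ** w)$r$q = (w ** h)$r$q" for r q using hw by simp
      have "h$2$1 = - h$1$2" using e[of 1 1] by (simp add: w_def matrix_matrix_mult_def sum_2)
      moreover have "h$2$2 = h$1$1" using e[of 1 2] by (simp add: w_def matrix_matrix_mult_def sum_2)
      ultimately show ?thesis unfolding x_def y_def mat2_eq_iff by simp
    qed
    have det1: "x*x + y*y = 1" using dh unfolding hh mat2_det by simp
    define c where "c = x + i*y"
    have cd: "c * (x - i*y) = 1"
    proof -
      have "c * (x - i*y) = x*x - (i*i)*(y*y)" unfolding c_def by (simp add: algebra_simps)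
      thus ?thesis using det1 ii by simp
    qed
    have cnz: "c \<noteq> 0" using cd by auto
    have ic: "inverse c = x - i*y" using cd by (metis inverse_unique)
    obtain n where n: "c = a ^ n" using gen cnz by blast
    have "D c = mat2 ((c + inverse c)/2) (i*(inverse c - c)/2) (i*(c - inverse c)/2) ((c + inverse c)/2)"
      by (rule Dform[OF cnz])
    also have "\<dots> = h" unfolding ic unfolding hh c_def mat2_eq using entlem[OF two ii, of x y] by blast
    finally have "h = D c" by simp
    thus "\<exists>n. h = mpow (D a) n" using n powD by auto
  qed
qed

theorem lemma2:
  fixes a :: "'a::{field,finite}" and p :: nat
  assumes "CARD('a) = p" and "prime p" and "p mod 4 = 1"
    and "a \<noteq> 0" and "\<forall>x::'a. x \<noteq> 0 \<longrightarrow> (\<exists>n::nat. x = a ^ n)"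
  defines "k \<equiv> (p - 1) div 4"
  defines "g \<equiv> mat2 a 0 0 (inverse a)"
  defines "s \<equiv> mat2 1 (inverse 2 * a ^ k) (a ^ k) (inverse 2)"
  defines "w \<equiv> mat2 0 1 (-1) (0::'a)"
  shows "generates (s ** g ** matrix_inv s) (centralizer_SL2 w)"
proof -
  have "p \<ge> 2" using prime_ge_2_nat[OF assms(2)] .
  hence p5: "p \<ge> 5" using assms(3) by presburger
  have two: "(2::'a) \<noteq> 0"
  proof
    assume "(2::'a) = 0"
    hence c2: "CHAR('a) dvd 2" using of_nat_eq_0_iff_char_dvd[of 2, where 'a='a] by simp
    have "CHAR('a) dvd p" using CHAR_dvd_CARD[where 'a='a] assms(1) by simp
    hence "CHAR('a) = 1 \<or> CHAR('a) = p" using assms(2) unfolding prime_nat_iff by blast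
    hence "CHAR('a) = p" by simp
    hence "p \<le> 2" using c2 by (simp add: dvd_imp_le)
    thus False using p5 by simp
  qed
  define i where "i = a ^ k"
  have p4k: "p - 1 = 4 * k" using assms(3) unfolding k_def by presburger
  have a4k: "a ^ (4*k) = 1" using fermat_field[OF assms(4)] assms(1) p4k by simp
  have ne1: "a ^ (2*k) \<noteq> 1"
  proof
    assume h: "a ^ (2*k) = 1"
    have kpos: "k > 0" using p5 p4k by simp
    have "UNIV - {0} \<subseteq> (\<lambda>n. a ^ n) ` {..<2*k}"
    proof
      fix x :: 'a assume "x \<in> UNIV - {0}"
      then obtain n where n: "x = a ^ n" using assms(5) by auto
      have "a ^ n = a ^ (2*k * (n div (2*k)) + n mod (2*k))" by simp
      also have "\<dots> = (a ^ (2*k)) ^ (n div (2*k)) * a ^ (n mod (2*k))" by (metis power_add power_mult)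
      also have "\<dots> = a ^ (n mod (2*k))" using h by simp
      finally show "x \<in> (\<lambda>n. a ^ n) ` {..<2*k}" using n kpos by auto
    qed
    hence "card (UNIV - {0::'a}) \<le> card ((\<lambda>n. a ^ n) ` {..<2*k})" by (intro card_mono) auto
    also have "\<dots> \<le> 2*k" using card_image_le[of "{..<2*k}"] by simp
    finally have "p - 1 \<le> 2 * k" using assms(1) by (simp add: card_Diff_singleton_if)
    thus False using p4k kpos by simp
  qed
  have ii: "i * i = -1"
  proof -
    have e: "a^(4*k) = a^(2*k) * a^(2*k)" by (simp flip: power_add)
    have "(a^(2*k) - 1) * (a^(2*k) + 1) = 0"
      using a4k unfolding e by (simp add: algebra_simps)
    hence "a^(2*k) = -1" using ne1 by (simp add: eq_neg_iff_add_eq_0)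
    moreover have "i * i = a^(2*k)" unfolding i_def by (simp flip: power_add mult_2)
    ultimately show ?thesis by simp
  qed
  show ?thesis unfolding s_def g_def w_def
    using main_part[OF two ii[unfolded i_def] assms(4,5)] .
qed
end
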